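(* Let $R$ be a finitely generated $\mathbb{N}^s$-graded algebra over a commutative ring $A$, and let $M$ be a finitely generated $\mathbb{Z}^s$-graded $R$-module. Then either $M_t=0$ for $t\gg 0$, or $M_t\neq 0$ for $t\gg 0$.
   Context: For a property depending on $t\in\mathbb{Z}^s$, "the property holds for $t\gg 0$" means that there exists $t_0\in\mathbb{Z}^s$ such that it holds for all $t\in t_0+\mathbb{N}^s$. *)

theory Defs
  imports Main
begin

text \<open>Multidegrees: elements of N^s are functions 's => nat, elements of Z^s are
functions 's => int, where 's is a finite index type with CARD('s) = s.\<close>

definition unit_deg :: "'s \<Rightarrow> ('s \<Rightarrow> nat)" where
  "unit_deg i = (\<lambda>j. if j = i then 1 else 0)"

definition is_ring_hom :: "('a::comm_ring_1 \<Rightarrow> 'r::comm_ring_1) \<Rightarrow> bool" where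
  "is_ring_hom \<phi> \<longleftrightarrow> \<phi> 1 = 1 \<and> (\<forall>a b. \<phi> (a + b) = \<phi> a + \<phi> b) \<and> (\<forall>a b. \<phi> (a * b) = \<phi> a * \<phi> b)"

definition is_module_action :: "('r::comm_ring_1 \<Rightarrow> 'm::ab_group_add \<Rightarrow> 'm) \<Rightarrow> bool" where
  "is_module_action act \<longleftrightarrow>
     (\<forall>r s m. act (r + s) m = act r m + act s m) \<and>
     (\<forall>r m n. act r (m + n) = act r m + act r n) \<and>
     (\<forall>r s m. act (r * s) m = act r (act s m)) \<and>
     (\<forall>m. act 1 m = m)"

definition graded_algebra ::
  "('a::comm_ring_1 \<Rightarrow> 'r::comm_ring_1) \<Rightarrow> (('s \<Rightarrow> nat) \<Rightarrow> 'r set) \<Rightarrow> bool" where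
  "graded_algebra \<phi> Rg \<longleftrightarrow>
     is_ring_hom \<phi> \<and>
     (\<forall>d. 0 \<in> Rg d \<and> (\<forall>x\<in>Rg d. \<forall>y\<in>Rg d. x + y \<in> Rg d \<and> - x \<in> Rg d)) \<and>
     (\<forall>d e. \<forall>x\<in>Rg d. \<forall>y\<in>Rg e. x * y \<in> Rg (\<lambda>i. d i + e i)) \<and>
     range \<phi> \<subseteq> Rg (\<lambda>_. 0) \<and>
     (\<forall>x. \<exists>D f. finite D \<and> (\<forall>d\<in>D. f d \<in> Rg d) \<and> x = sum f D) \<and>
     (\<forall>D f. finite D \<and> (\<forall>d\<in>D. f d \<in> Rg d) \<and> sum f D = 0 \<longrightarrow> (\<forall>d\<in>D. f d = 0))"

inductive_set alg_gen :: "('a::comm_ring_1 \<Rightarrow> 'r::comm_ring_1) \<Rightarrow> 'r set \<Rightarrow> 'r set"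
  for \<phi> G where
  base: "\<phi> a \<in> alg_gen \<phi> G"
| gen: "g \<in> G \<Longrightarrow> g \<in> alg_gen \<phi> G"
| add: "x \<in> alg_gen \<phi> G \<Longrightarrow> y \<in> alg_gen \<phi> G \<Longrightarrow> x + y \<in> alg_gen \<phi> G"
| mult: "x \<in> alg_gen \<phi> G \<Longrightarrow> y \<in> alg_gen \<phi> G \<Longrightarrow> x * y \<in> alg_gen \<phi> G"
| neg: "x \<in> alg_gen \<phi> G \<Longrightarrow> - x \<in> alg_gen \<phi> G"

definition fg_standard_graded_algebra ::
  "('a::comm_ring_1 \<Rightarrow> 'r::comm_ring_1) \<Rightarrow> (('s \<Rightarrow> nat) \<Rightarrow> 'r set) \<Rightarrow> bool" where
  "fg_standard_graded_algebra \<phi> Rg \<longleftrightarrow>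
     graded_algebra \<phi> Rg \<and>
     (\<exists>G. finite G \<and> (\<forall>g\<in>G. \<exists>i. g \<in> Rg (unit_deg i)) \<and> alg_gen \<phi> G = UNIV)"

definition graded_module ::
  "(('s \<Rightarrow> nat) \<Rightarrow> 'r::comm_ring_1 set) \<Rightarrow> ('r \<Rightarrow> 'm::ab_group_add \<Rightarrow> 'm)
     \<Rightarrow> (('s \<Rightarrow> int) \<Rightarrow> 'm set) \<Rightarrow> bool" where
  "graded_module Rg act Mg \<longleftrightarrow>
     is_module_action act \<and>
     (\<forall>t. 0 \<in> Mg t \<and> (\<forall>x\<in>Mg t. \<forall>y\<in>Mg t. x + y \<in> Mg t \<and> - x \<in> Mg t)) \<and>
     (\<forall>d t. \<forall>r\<in>Rg d. \<forall>m\<in>Mg t. act r m \<in> Mg (\<lambda>i. int (d i) + t i)) \<and>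
     (\<forall>m. \<exists>D f. finite D \<and> (\<forall>t\<in>D. f t \<in> Mg t) \<and> m = sum f D) \<and>
     (\<forall>D f. finite D \<and> (\<forall>t\<in>D. f t \<in> Mg t) \<and> sum f D = 0 \<longrightarrow> (\<forall>t\<in>D. f t = 0))"

definition fin_gen_module :: "('r::comm_ring_1 \<Rightarrow> 'm::ab_group_add \<Rightarrow> 'm) \<Rightarrow> bool" where
  "fin_gen_module act \<longleftrightarrow>
     (\<exists>G. finite G \<and> (\<forall>m. \<exists>c. m = (\<Sum>g\<in>G. act (c g) g)))"

end

theory Submission
  imports Defs
begin

inductive_set idl :: "'r::comm_ring_1 set \<Rightarrow> 'r set" for S where
  z: "0 \<in> idl S"
| sm: "y \<in> S \<Longrightarrow> r * y \<in> idl S"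
| ad: "x \<in> idl S \<Longrightarrow> x' \<in> idl S \<Longrightarrow> x + x' \<in> idl S"

lemma idl_neg: "x \<in> idl S \<Longrightarrow> - x \<in> idl S"
proof (induction rule: idl.induct)
  case z then show ?case by (simp add: idl.z)
next
  case (sm y r) then show ?case using idl.sm[of y S "-r"] by simp
next
  case (ad x x') then show ?case using idl.ad[of "-x" S "-x'"] by simp
qed

lemma idl_mult1: "y \<in> idl S2 \<Longrightarrow> a \<in> S1 \<Longrightarrow> (\<forall>a\<in>S1. \<forall>b\<in>S2. a*b\<in>S3) \<Longrightarrow> r * a * y \<in> idl S3"
proof (induction rule: idl.induct)
  case z then show ?case by (simp add: idl.z)
next
  case (sm b r')
  have "r * a * (r' * b) = (r * r') * (a * b)" by (simp add: algebra_simps)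
  moreover have "(r * r') * (a * b) \<in> idl S3" using sm by (intro idl.sm) auto
  ultimately show ?case by metis
next
  case (ad x x') then show ?case by (simp add: distrib_left idl.ad)
qed

lemma idl_mult: "x \<in> idl S1 \<Longrightarrow> y \<in> idl S2 \<Longrightarrow> (\<forall>a\<in>S1. \<forall>b\<in>S2. a*b\<in>S3) \<Longrightarrow> x * y \<in> idl S3"
proof (induction rule: idl.induct)
  case z then show ?case by (simp add: idl.z)
next
  case (sm a r) then show ?case using idl_mult1 by blast
next
  case (ad x x') then show ?case by (simp add: distrib_right idl.ad)
qed

lemma act_zero_left: "is_module_action act \<Longrightarrow> act 0 n = 0"
proof -
  assume "is_module_action act"
  then have "act (0+0) n = act 0 n + act 0 n" unfolding is_module_action_def by blast
  then show ?thesis by simp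
qed

lemma act_zero_right: "is_module_action act \<Longrightarrow> act r 0 = 0"
proof -
  assume "is_module_action act"
  then have "act r (0+0) = act r 0 + act r 0" unfolding is_module_action_def by blast
  then show ?thesis by simp
qed

lemma idl_act: assumes M: "is_module_action act" shows "x \<in> idl S \<Longrightarrow> (\<forall>y\<in>S. act y n = 0) \<Longrightarrow> act x n = 0"
proof (induction rule: idl.induct)
  case z then show ?case by (simp add: act_zero_left[OF M])
next
  case (sm y r) then show ?case using M unfolding is_module_action_def by (simp add: act_zero_right[OF M])
next
  case (ad x x') then show ?case using M unfolding is_module_action_def by simp
qed

lemma sum_closed:
  assumes "\<And>x y. x\<in>S \<Longrightarrow> y\<in>S \<Longrightarrow> x+y\<in>S" "0\<in>S" "finite A" "\<forall>a\<in>A. h a \<in> S"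
  shows "sum h A \<in> S"
  using assms(3,4) by (induction A rule: finite_induct) (auto simp: assms(1,2))

lemma graded_uniq:
  fixes X :: "'k \<Rightarrow> 'v::ab_group_add set"
  assumes cl: "\<forall>t. 0 \<in> X t \<and> (\<forall>x\<in>X t. \<forall>y\<in>X t. x + y \<in> X t \<and> - x \<in> X t)"
    and un: "\<forall>D f. finite D \<and> (\<forall>t\<in>D. f t \<in> X t) \<and> sum f D = 0 \<longrightarrow> (\<forall>t\<in>D. f t = 0)"
    and x: "x \<in> X d" and D: "finite D" and f: "\<forall>e\<in>D. f e \<in> X e" and s: "x = sum f D"
  shows "x = (if d \<in> D then f d else 0)"
proof (cases "d \<in> D")
  case True
  define g where "g = f(d := f d - x)"
  have "sum g D = g d + sum g (D - {d})" using True D by (simp add: sum.remove)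
  also have "sum g (D - {d}) = sum f (D - {d})" by (rule sum.cong) (auto simp: g_def)
  also have "sum f D = f d + sum f (D - {d})" using True D by (simp add: sum.remove)
  ultimately have "sum g D = 0" using s by (simp add: g_def)
  moreover have "\<forall>t\<in>D. g t \<in> X t"
  proof
    fix t assume t: "t \<in> D"
    show "g t \<in> X t"
    proof (cases "t = d")
      case True
      have "- x \<in> X d" using cl x by blast
      then have "f d + - x \<in> X d" using cl f \<open>d \<in> D\<close> by blast
      then show ?thesis using True by (simp add: g_def)
    next
      case False then show ?thesis using f t by (simp add: g_def)
    qed
  qed
  ultimately have "g d = 0" using un D True by blast
  then show ?thesis using True by (simp add: g_def)
next
  case False
  define g where "g = f(d := - x)"
  have "sum g (insert d D) = g d + sum g D" using False D by simp
  also have "sum g D = sum f D" by (rule sum.cong) (use False in \<open>auto simp: g_def\<close>)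
  finally have "sum g (insert d D) = 0" using s by (simp add: g_def)
  moreover have "\<forall>t\<in>insert d D. g t \<in> X t"
  proof
    fix t assume t: "t \<in> insert d D"
    show "g t \<in> X t"
    proof (cases "t = d")
      case True
      have "- x \<in> X d" using cl x by blast
      then show ?thesis using True by (simp add: g_def)
    next
      case False then show ?thesis using f t by (simp add: g_def)
    qed
  qed
  ultimately have "g d = 0" using un D by blast
  then show ?thesis using False by (simp add: g_def)
qed

definition goodP :: "(('s \<Rightarrow> nat) \<Rightarrow> 'r::comm_ring_1 set) \<Rightarrow> ('s \<Rightarrow> nat) \<Rightarrow> 'r \<Rightarrow> bool" where
  "goodP Rg d x \<longleftrightarrow> x \<in> Rg d \<and> (\<forall>b. (\<forall>i. b i \<le> d i) \<longrightarrow> x \<in> idl (Rg b))"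

definition goodsum :: "(('s \<Rightarrow> nat) \<Rightarrow> 'r::comm_ring_1 set) \<Rightarrow> 'r \<Rightarrow> bool" where
  "goodsum Rg x \<longleftrightarrow> (\<exists>D f. finite D \<and> (\<forall>d\<in>D. goodP Rg d (f d)) \<and> x = sum f D)"

lemma ga_cl0: "graded_algebra \<phi> Rg \<Longrightarrow> \<forall>d. 0 \<in> Rg d \<and> (\<forall>x\<in>Rg d. \<forall>y\<in>Rg d. x + y \<in> Rg d \<and> - x \<in> Rg d)"
  unfolding graded_algebra_def by (elim conjE) assumption

lemma ga_cl: "graded_algebra \<phi> Rg \<Longrightarrow> 0 \<in> Rg d \<and> (\<forall>x\<in>Rg d. \<forall>y\<in>Rg d. x + y \<in> Rg d \<and> - x \<in> Rg d)"
  using ga_cl0 by (rule spec)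

lemma ga_mul: "graded_algebra \<phi> Rg \<Longrightarrow> \<forall>d e. \<forall>x\<in>Rg d. \<forall>y\<in>Rg e. x * y \<in> Rg (\<lambda>i. d i + e i)"
  unfolding graded_algebra_def by (elim conjE) assumption

lemma ga_hom: "graded_algebra \<phi> Rg \<Longrightarrow> is_ring_hom \<phi>"
  unfolding graded_algebra_def by (elim conjE) assumption

lemma ga_range: "graded_algebra \<phi> Rg \<Longrightarrow> range \<phi> \<subseteq> Rg (\<lambda>_. 0)"
  unfolding graded_algebra_def by (elim conjE) assumption

lemma goodP_zero: "graded_algebra \<phi> Rg \<Longrightarrow> goodP Rg d 0"
  unfolding goodP_def using ga_cl by (blast intro: idl.z)

lemma goodP_add: "graded_algebra \<phi> Rg \<Longrightarrow> goodP Rg d x \<Longrightarrow> goodP Rg d y \<Longrightarrow> goodP Rg d (x + y)"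
  unfolding goodP_def using ga_cl by (blast intro: idl.ad)

lemma goodP_neg: "graded_algebra \<phi> Rg \<Longrightarrow> goodP Rg d x \<Longrightarrow> goodP Rg d (- x)"
  unfolding goodP_def using ga_cl by (blast intro: idl_neg)

lemma goodP_mult:
  assumes g: "graded_algebra \<phi> Rg" and x: "goodP Rg d x" and y: "goodP Rg e y"
  shows "goodP Rg (\<lambda>i. d i + e i) (x * y)"
proof -
  have mul: "\<forall>d e. \<forall>x\<in>Rg d. \<forall>y\<in>Rg e. x * y \<in> Rg (\<lambda>i. d i + e i)"
    using ga_mul[OF g] .
  have "x * y \<in> idl (Rg b)" if b: "\<forall>i. b i \<le> d i + e i" for b
  proof -
    define b1 where "b1 = (\<lambda>i. min (b i) (d i))"
    define b2 where "b2 = (\<lambda>i. b i - b1 i)"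
    have "\<forall>i. b1 i \<le> d i" by (simp add: b1_def)
    moreover have "\<forall>i. b2 i \<le> e i"
    proof
      fix i show "b2 i \<le> e i" using b[rule_format, of i] unfolding b1_def b2_def min_def by arith
    qed
    ultimately have "x \<in> idl (Rg b1)" "y \<in> idl (Rg b2)" using x y unfolding goodP_def by auto
    moreover have "(\<lambda>i. b1 i + b2 i) = b" by (auto simp: b1_def b2_def)
    ultimately show ?thesis using idl_mult[of x "Rg b1" y "Rg b2" "Rg b"] mul by metis
  qed
  then show ?thesis using x y mul unfolding goodP_def by blast
qed

lemma goodsum_group:
  assumes g: "graded_algebra \<phi> Rg" and J: "finite J" and T: "\<forall>j\<in>J. goodP Rg (deg j) (T j)"
  shows "goodsum Rg (sum T J)"
proof -
  have "sum T J = sum (\<lambda>w. sum T {j\<in>J. deg j = w}) (deg ` J)"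
    using J by (rule sum.image_gen)
  moreover have "\<forall>w\<in>deg ` J. goodP Rg w (sum T {j\<in>J. deg j = w})"
  proof
    fix w assume "w \<in> deg ` J"
    have "sum T {j\<in>J. deg j = w} \<in> {x. goodP Rg w x}"
    proof (rule sum_closed)
      show "x + y \<in> {x. goodP Rg w x}" if "x \<in> {x. goodP Rg w x}" "y \<in> {x. goodP Rg w x}" for x y
        using that goodP_add[OF g] by blast
      show "0 \<in> {x. goodP Rg w x}" using goodP_zero[OF g] by blast
      show "finite {j\<in>J. deg j = w}" using J by simp
      show "\<forall>a\<in>{j\<in>J. deg j = w}. T a \<in> {x. goodP Rg w x}" using T by auto
    qed
    then show "goodP Rg w (sum T {j\<in>J. deg j = w})" by simp
  qed
  ultimately show ?thesis unfolding goodsum_def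
    by (intro exI[of _ "deg ` J"] exI[of _ "\<lambda>w. sum T {j\<in>J. deg j = w}"] conjI finite_imageI J)
qed

lemma zero_vec: "\<forall>i. b i \<le> (0::nat) \<Longrightarrow> b = (\<lambda>_. 0)"
  by (simp add: fun_eq_iff)

lemma alg_gen_good:
  fixes Rg :: "('s \<Rightarrow> nat) \<Rightarrow> 'r::comm_ring_1 set"
  assumes g: "graded_algebra \<phi> Rg" and G: "\<forall>g\<in>G. \<exists>i. g \<in> Rg (unit_deg i)"
    and x: "x \<in> alg_gen \<phi> G"
  shows "goodsum Rg x"
proof -
  have "\<phi> 1 = 1" using ga_hom[OF g] unfolding is_ring_hom_def by (elim conjE) assumption
  then have one: "1 \<in> Rg (\<lambda>_. 0)" using ga_range[OF g] by (metis rangeI subsetD)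
  show ?thesis using x
proof (induction rule: alg_gen.induct)
  case (base a)
  have pa: "\<phi> a \<in> Rg (\<lambda>_. 0)" using ga_range[OF g] by blast
  have "goodP Rg (\<lambda>_. 0) (\<phi> a)"
  proof (unfold goodP_def, intro conjI pa allI impI)
    have i0: "\<phi> a \<in> idl (Rg (\<lambda>_. 0))" using idl.sm[OF one, of "\<phi> a"] by simp
    fix b :: "'s \<Rightarrow> nat" assume "\<forall>i. b i \<le> 0"
    then have "b = (\<lambda>_. 0)" by (rule zero_vec)
    then show "\<phi> a \<in> idl (Rg b)" using i0 by simp
  qed
  then show ?case unfolding goodsum_def by (intro exI[of _ "{\<lambda>_. 0}"] exI[of _ "\<lambda>_. \<phi> a"] conjI) simp_all
next
  case (gen h)
  obtain i where hi: "h \<in> Rg (unit_deg i)" using G gen by blast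
  have "goodP Rg (unit_deg i) h"
    unfolding goodP_def
  proof (intro conjI allI impI hi)
    fix b assume b: "\<forall>j. b j \<le> unit_deg i j"
    show "h \<in> idl (Rg b)"
    proof (cases "b i = 0")
      case True
      have "\<forall>j. b j \<le> 0"
      proof
        fix j show "b j \<le> 0" using b[rule_format, of j] True by (cases "j = i") (auto simp: unit_deg_def)
      qed
      then have "b = (\<lambda>_. 0)" by (rule zero_vec)
      then show ?thesis using idl.sm[OF one, of h] by simp
    next
      case False
      have "b j = unit_deg i j" for j
        using b[rule_format, of j] False by (cases "j = i") (auto simp: unit_deg_def)
      then have "b = unit_deg i" by (rule ext)
      then show ?thesis using idl.sm[OF hi, of 1] by simp
    qed
  qed
  then show ?case unfolding goodsum_def by (intro exI[of _ "{unit_deg i}"] exI[of _ "\<lambda>_. h"] conjI) simp_all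
next
  case (add x y)
  obtain D f where D: "finite D" "\<forall>d\<in>D. goodP Rg d (f d)" "x = sum f D"
    using add.IH(1) unfolding goodsum_def by blast
  obtain D' f' where D': "finite D'" "\<forall>d\<in>D'. goodP Rg d (f' d)" "y = sum f' D'"
    using add.IH(2) unfolding goodsum_def by blast
  have "x + y = sum (case_sum f f') (D <+> D')"
    using D D' by (simp add: sum.Plus)
  moreover have "goodsum Rg (sum (case_sum f f') (D <+> D'))"
  proof (rule goodsum_group[OF g, of "D <+> D'" "case_sum (\<lambda>d. d) (\<lambda>d. d)" "case_sum f f'"])
    show "finite (D <+> D')" using D D' by simp
    show "\<forall>j\<in>D <+> D'. goodP Rg (case_sum (\<lambda>d. d) (\<lambda>d. d) j) (case_sum f f' j)"
      using D(2) D'(2) by auto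
  qed
  ultimately show ?case by simp
next
  case (mult x y)
  obtain D f where D: "finite D" "\<forall>d\<in>D. goodP Rg d (f d)" "x = sum f D"
    using mult.IH(1) unfolding goodsum_def by blast
  obtain D' f' where D': "finite D'" "\<forall>d\<in>D'. goodP Rg d (f' d)" "y = sum f' D'"
    using mult.IH(2) unfolding goodsum_def by blast
  have "x * y = sum (\<lambda>(d, d'). f d * f' d') (D \<times> D')"
    using D D' by (simp add: sum_product sum.cartesian_product)
  moreover have "goodsum Rg (sum (\<lambda>(d, d'). f d * f' d') (D \<times> D'))"
  proof (rule goodsum_group[OF g, of "D \<times> D'" "\<lambda>(d, d'). (\<lambda>i. d i + d' i)" "\<lambda>(d, d'). f d * f' d'"])
    show "finite (D \<times> D')" using D D' by simp
    show "\<forall>j\<in>D \<times> D'. goodP Rg ((\<lambda>(d, d'). (\<lambda>i. d i + d' i)) j) ((\<lambda>(d, d'). f d * f' d') j)"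
      using D(2) D'(2) goodP_mult[OF g] by auto
  qed
  ultimately show ?case by simp
next
  case (neg x)
  obtain D f where D: "finite D" "\<forall>d\<in>D. goodP Rg d (f d)" "x = sum f D"
    using neg.IH unfolding goodsum_def by blast
  have "- x = sum (\<lambda>d. - f d) D" using D by (simp add: sum_negf)
  moreover have "\<forall>d\<in>D. goodP Rg d (- f d)" using D(2) goodP_neg[OF g] by blast
  ultimately show ?case unfolding goodsum_def
    by (intro exI[of _ D] exI[of _ "\<lambda>d. - f d"] conjI D(1))
qed
qed

lemma act_sum_left: assumes M: "is_module_action act" and "finite A"
  shows "act (sum f A) n = (\<Sum>a\<in>A. act (f a) n)"
  using assms(2) by (induction A rule: finite_induct)
    (use M in \<open>auto simp: act_zero_left is_module_action_def\<close>)

lemma act_sum_right: assumes M: "is_module_action act" and "finite A"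
  shows "act r (sum f A) = (\<Sum>a\<in>A. act r (f a))"
  using assms(2) by (induction A rule: finite_induct)
    (use M in \<open>auto simp: act_zero_right is_module_action_def\<close>)

theorem lemma2p5:
  fixes \<phi> :: "'a::comm_ring_1 \<Rightarrow> 'r::comm_ring_1"
    and Rg :: "('s::finite \<Rightarrow> nat) \<Rightarrow> 'r set"
    and act :: "'r \<Rightarrow> 'm::ab_group_add \<Rightarrow> 'm"
    and Mg :: "('s \<Rightarrow> int) \<Rightarrow> 'm set"
  assumes "fg_standard_graded_algebra \<phi> Rg"
    and "graded_module Rg act Mg"
    and "fin_gen_module act"
  shows "(\<exists>t0::'s \<Rightarrow> int. \<forall>t. (\<forall>i. t0 i \<le> t i) \<longrightarrow> Mg t = {0})
       \<or> (\<exists>t0::'s \<Rightarrow> int. \<forall>t. (\<forall>i. t0 i \<le> t i) \<longrightarrow> Mg t \<noteq> {0})"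
proof -
  have gA: "graded_algebra \<phi> Rg"
    using assms(1) unfolding fg_standard_graded_algebra_def by (rule conjunct1)
  from assms(1)[unfolded fg_standard_graded_algebra_def, THEN conjunct2]
  obtain G where G0: "finite G \<and> (\<forall>g\<in>G. \<exists>i. g \<in> Rg (unit_deg i)) \<and> alg_gen \<phi> G = UNIV" ..
  have G: "\<forall>g\<in>G. \<exists>i. g \<in> Rg (unit_deg i)" using G0 by (elim conjE)
  have GU: "alg_gen \<phi> G = UNIV" using G0 by (elim conjE)
  note MM = assms(2)[unfolded graded_module_def]
  have M: "is_module_action act" using MM by (rule conjunct1)
  have Mcl: "\<forall>t. 0 \<in> Mg t \<and> (\<forall>x\<in>Mg t. \<forall>y\<in>Mg t. x + y \<in> Mg t \<and> - x \<in> Mg t)"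
    using MM[THEN conjunct2, THEN conjunct1] .
  have Mmul: "\<forall>d t. \<forall>r\<in>Rg d. \<forall>m\<in>Mg t. act r m \<in> Mg (\<lambda>i. int (d i) + t i)"
    using MM[THEN conjunct2, THEN conjunct2, THEN conjunct1] .
  have Mdec: "\<forall>m. \<exists>D f. finite D \<and> (\<forall>t\<in>D. f t \<in> Mg t) \<and> m = sum f D"
    using MM[THEN conjunct2, THEN conjunct2, THEN conjunct2, THEN conjunct1] .
  have Mun: "\<forall>D f. finite D \<and> (\<forall>t\<in>D. f t \<in> Mg t) \<and> sum f D = 0 \<longrightarrow> (\<forall>t\<in>D. f t = 0)"
    using MM[THEN conjunct2, THEN conjunct2, THEN conjunct2, THEN conjunct2] .
  from assms(3)[unfolded fin_gen_module_def]
  obtain GM where GM0: "finite GM \<and> (\<forall>m. \<exists>c. m = (\<Sum>g\<in>GM. act (c g) g))" ..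
  have GM: "finite GM" using GM0 by (rule conjunct1)
  have gens: "\<forall>m. \<exists>c. m = (\<Sum>g\<in>GM. act (c g) g)" using GM0 by (rule conjunct2)
  have "\<forall>x. goodsum Rg x"
  proof
    fix x :: 'r have "x \<in> alg_gen \<phi> G" using GU by (rule ssubst) (rule UNIV_I)
    then show "goodsum Rg x" by (rule alg_gen_good[OF gA G])
  qed
  then have H: "\<forall>x. \<exists>D f. finite D \<and> (\<forall>d\<in>D. goodP Rg d (f d)) \<and> x = sum f D"
    unfolding goodsum_def .
  from choice[OF H]
  obtain DC where DC0: "\<forall>x. \<exists>f. finite (DC x) \<and> (\<forall>d\<in>DC x. goodP Rg d (f d)) \<and> x = sum f (DC x)" ..
  from choice[OF DC0]
  obtain FC where FC0: "\<forall>x. finite (DC x) \<and> (\<forall>d\<in>DC x. goodP Rg d (FC x d)) \<and> x = sum (FC x) (DC x)" ..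
  have DC1: "finite (DC x)" for x using FC0[rule_format, of x] by (rule conjunct1)
  have DC2: "goodP Rg d (FC x d)" if "d \<in> DC x" for x d
    using FC0[rule_format, of x, THEN conjunct2, THEN conjunct1] that by (rule bspec)
  have DC3: "x = sum (FC x) (DC x)" for x using FC0[rule_format, of x, THEN conjunct2, THEN conjunct2] .
  note DC = DC1 DC2 DC3
  from choice[OF Mdec]
  obtain DM where DM0: "\<forall>m. \<exists>f. finite (DM m) \<and> (\<forall>t\<in>DM m. f t \<in> Mg t) \<and> m = sum f (DM m)" ..
  from choice[OF DM0]
  obtain FM where FM0: "\<forall>m. finite (DM m) \<and> (\<forall>t\<in>DM m. FM m t \<in> Mg t) \<and> m = sum (FM m) (DM m)" ..
  have DM1: "finite (DM x)" for x using FM0[rule_format, of x] by (rule conjunct1)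
  have DM2: "FM x d \<in> Mg d" if "d \<in> DM x" for x d
    using FM0[rule_format, of x, THEN conjunct2, THEN conjunct1] that by (rule bspec)
  have DM3: "x = sum (FM x) (DM x)" for x using FM0[rule_format, of x, THEN conjunct2, THEN conjunct2] .
  note DM = DM1 DM2 DM3
  define U where "U = (\<Union>g\<in>GM. DM g)"
  have U: "finite U" using GM DM(1) unfolding U_def by blast
  define t0 where "t0 = (\<lambda>i. Max (insert 0 ((\<lambda>u. u i) ` U)))"
  have t0: "u i \<le> t0 i" if "u \<in> U" for u i
    unfolding t0_def using U that by (intro Max_ge) auto
  have key: "Mg t' = {0}" if t: "\<forall>i. t0 i \<le> t i" and Mt: "Mg t = {0}" and tt: "\<forall>i. t i \<le> t' i" for t t'
  proof
    show "{0} \<subseteq> Mg t'" using Mcl by blast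
    show "Mg t' \<subseteq> {0}"
    proof
      fix m assume m: "m \<in> Mg t'"
      obtain c where c: "m = (\<Sum>g\<in>GM. act (c g) g)" using gens by blast
      define J where "J = (SIGMA g:GM. (DC (c g) \<times> DM g))"
      define T where "T = (\<lambda>(g, d, u). act (FC (c g) d) (FM g u))"
      define deg :: "'m \<times> ('s \<Rightarrow> nat) \<times> ('s \<Rightarrow> int) \<Rightarrow> 's \<Rightarrow> int"
        where "deg = (\<lambda>(g, d, u). (\<lambda>i. int (d i) + u i))"
      have J: "finite J" unfolding J_def using GM DC(1) DM(1) by auto
      have Tdeg: "T j \<in> Mg (deg j)" if jJ: "j \<in> J" for j
      proof -
        obtain g d u where jj: "j = (g, d, u)" "d \<in> DC (c g)" "u \<in> DM g"
          using jJ unfolding J_def by blast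
        have "FC (c g) d \<in> Rg d" using DC(2)[OF jj(2)] unfolding goodP_def by blast
        moreover have "FM g u \<in> Mg u" using DM(2)[OF jj(3)] .
        ultimately have "act (FC (c g) d) (FM g u) \<in> Mg (\<lambda>i. int (d i) + u i)" using Mmul by blast
        then show ?thesis unfolding jj T_def deg_def by simp
      qed
      have "act (c g) g = (\<Sum>(d, u)\<in>DC (c g) \<times> DM g. act (FC (c g) d) (FM g u))" for g
      proof -
        have "act (c g) g = act (sum (FC (c g)) (DC (c g))) (sum (FM g) (DM g))"
          using DC(3) DM(3) by metis
        also have "\<dots> = (\<Sum>d\<in>DC (c g). \<Sum>u\<in>DM g. act (FC (c g) d) (FM g u))"
          by (simp add: act_sum_left[OF M DC(1)] act_sum_right[OF M DM(1)]) (rule sum.swap)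
        also have "\<dots> = (\<Sum>(d, u)\<in>DC (c g) \<times> DM g. act (FC (c g) d) (FM g u))"
          by (simp add: sum.cartesian_product)
        finally show ?thesis .
      qed
      then have "m = (\<Sum>g\<in>GM. \<Sum>(d, u)\<in>DC (c g) \<times> DM g. act (FC (c g) d) (FM g u))"
        using c by simp
      also have "\<dots> = sum T J"
        unfolding J_def T_def using GM DC(1) DM(1) by (subst sum.Sigma) auto
      finally have mT: "m = sum T J" .
      define h where "h = (\<lambda>w. sum T {j\<in>J. deg j = w})"
      have "sum T J = sum h (deg ` J)" unfolding h_def using J by (rule sum.image_gen)
      moreover have hM: "\<forall>w\<in>deg ` J. h w \<in> Mg w"
      proof
        fix w assume "w \<in> deg ` J"
        show "h w \<in> Mg w" unfolding h_def
        proof (rule sum_closed)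
          show "x + y \<in> Mg w" if "x \<in> Mg w" "y \<in> Mg w" for x y using that Mcl by blast
          show "0 \<in> Mg w" using Mcl by blast
          show "finite {j\<in>J. deg j = w}" using J by simp
          show "\<forall>a\<in>{j\<in>J. deg j = w}. T a \<in> Mg w" using Tdeg by blast
        qed
      qed
      ultimately have "m = (if t' \<in> deg ` J then h t' else 0)"
        using graded_uniq[of Mg m t' "deg ` J" h] Mcl Mun m hM mT J \<open>sum T J = sum h (deg ` J)\<close> by simp
      moreover have "h t' = 0" unfolding h_def
      proof (rule sum.neutral, rule ballI)
        fix j assume j: "j \<in> {j\<in>J. deg j = t'}"
        then obtain g d u where jj: "j = (g, d, u)" "g \<in> GM" "d \<in> DC (c g)" "u \<in> DM g"
          and dg: "(\<lambda>i. int (d i) + u i) = t'"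
          unfolding J_def deg_def by auto
        have uU: "u \<in> U" using jj unfolding U_def by auto
        define b where "b = (\<lambda>i. nat (t i - u i))"
        have tu: "t i \<ge> u i" for i using t0[OF uU, of i] t[rule_format, of i] by linarith
        have bd: "\<forall>i. b i \<le> d i"
        proof
          fix i
          have "int (d i) + u i = t' i" using dg by metis
          then show "b i \<le> d i" unfolding b_def using tt[rule_format, of i] tu[of i] by linarith
        qed
        have "FC (c g) d \<in> idl (Rg b)" using DC(2)[OF jj(3)] bd unfolding goodP_def by blast
        moreover have "\<forall>y\<in>Rg b. act y (FM g u) = 0"
        proof
          fix y assume "y \<in> Rg b"
          then have "act y (FM g u) \<in> Mg (\<lambda>i. int (b i) + u i)" using Mmul DM(2)[OF jj(4)] by blast
          moreover have "(\<lambda>i. int (b i) + u i) = t" unfolding b_def using tu by (auto intro!: ext)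
          ultimately show "act y (FM g u) = 0" using Mt by simp
        qed
        ultimately have "act (FC (c g) d) (FM g u) = 0" using idl_act[OF M] by blast
        then show "T j = 0" unfolding T_def jj by simp
      qed
      ultimately show "m \<in> {0}" by simp
    qed
  qed
  show ?thesis
  proof (cases "\<exists>t. (\<forall>i. t0 i \<le> t i) \<and> Mg t = {0}")
    case True
    then obtain t where "\<forall>i. t0 i \<le> t i" "Mg t = {0}" by blast
    then have "\<forall>t'. (\<forall>i. t i \<le> t' i) \<longrightarrow> Mg t' = {0}" using key by blast
    then show ?thesis by blast
  next
    case False
    then show ?thesis by blast
  qed
qed

end
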